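(* Let $f\colon M^n\to\mathbb{S}^{n+m}$ be an isometric immersion, $x\in M^n$, and $k$ an integer with $2\leq k\leq n/2$, and assume that at $x$ one has $\mathrm{Ric}_M(X)\geq b(n,k,H(x))$ for every unit $X\in T_xM$, where $b(n,k,H)=\frac{n(k-1)}{k}+\frac{n(k-1)H}{2k^2}\big(nH+\sqrt{n^2H^2+4k(n-k)}\big)$. For an integer $1\leq p\leq n-1$ and an orthonormal basis $\{e_1,\dots,e_n\}$ of $T_xM$ consider the inequality $$\sum_{i=1}^p\sum_{j=p+1}^n\big(2\|\alpha_f(e_i,e_j)\|^2-\langle\alpha_f(e_i,e_i),\alpha_f(e_j,e_j)\rangle\big)\leq p(n-p).\qquad(\#)$$ Then at $x$: (i) $(\#)$ holds for every orthonormal basis of $T_xM$ and every $1\leq p\leq k$, and it is strict for $p<k$. Moreover, if $\mathrm{Ric}_M(X)>b(n,k,H(x))$ for all unit $X\in T_xM$, then $(\#)$ is also strict for $p=k$. (ii) Assume $H(x)\neq 0$ if $k=2$. Then equality holds in $(\#)$ for an orthonormal basis $\{e_1,\dots,e_n\}$ of $T_xM$ if and only if $p=k$ and there is a Dupin principal normal $\eta\in N_fM(x)$ with $\|\eta\|=\lambda(n,k,H(x))$ such that $\mathrm{span}\{e_1,\dots,e_k\}\subset E_\eta(x)$. Moreover, in that case $\mathrm{Ric}_M(X)=b(n,k,H(x))$ for every unit $X\in\mathrm{span}\{e_1,\dots,e_k\}$, and if $H(x)\neq 0$ then $\eta$ and $\mathcal H(x)$ are collinear. (iii) If $H(x)=0$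 and $k=2$, then equality holds in $(\#)$ for an orthonormal basis $\{e_1,\dots,e_n\}$ of $T_xM$ if and only if $p=2$, there is $\eta\in N_fM(x)$ with $\|\eta\|\leq\lambda(n,2,0)$ such that $\alpha_f(X,Y)=\langle X,Y\rangle\eta$ for all $X,Y\in\mathrm{span}\{e_1,e_2\}$, and $\mathrm{Ric}_M(X)=b(n,2,0)$ for every unit $X\in\mathrm{span}\{e_1,e_2\}$.
   Context: $\mathbb{S}^{n+m}$ is the unit sphere; $\alpha_f$ is the second fundamental form of $f$ with values in the normal bundle $N_fM$, $\mathcal H=\frac1n\mathrm{tr}\,\alpha_f$ the normalized mean curvature vector and $H=\|\mathcal H\|$. $\mathrm{Ric}_M(X)$ is the non-normalized Ricci curvature in the unit direction $X$. $\lambda(n,k,H)=\frac{1}{2k}\big(nH+\sqrt{n^2H^2+4k(n-k)}\big)$. A vector $\eta\in N_fM(x)$ is a Dupin principal normal if $E_\eta(x)=\{X\in T_xM:\alpha_f(X,Y)=\langle X,Y\rangle\eta \text{ for all } Y\in T_xM\}$ has dimension at least $2$. *)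

theory Defs
  imports "HOL-Analysis.Analysis"
begin

text \<open>Pointwise setting at a fixed point x: T = T_xM is modelled by real^'n
 (n = CARD('n)), the normal space N_fM(x) by real^'m, and the second
 fundamental form at x by a symmetric bilinear map alpha.\<close>

definition sff :: "(real^'n \<Rightarrow> real^'n \<Rightarrow> real^'m) \<Rightarrow> bool" where
  "sff \<alpha> \<longleftrightarrow> (\<forall>X. linear (\<alpha> X)) \<and> (\<forall>Y. linear (\<lambda>X. \<alpha> X Y)) \<and> (\<forall>X Y. \<alpha> X Y = \<alpha> Y X)"

definition meanvec :: "(real^'n \<Rightarrow> real^'n \<Rightarrow> real^'m) \<Rightarrow> real^'m" where
  "meanvec \<alpha> = (1 / real CARD('n)) *\<^sub>R (\<Sum>b\<in>Basis. \<alpha> b b)"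

definition meancurv :: "(real^'n \<Rightarrow> real^'n \<Rightarrow> real^'m) \<Rightarrow> real" where
  "meancurv \<alpha> = norm (meanvec \<alpha>)"

text \<open>Curvature tensor of M at x given by the Gauss equation for a submanifold of
 the unit sphere: R(X,Y,Z,W) = <X,W><Y,Z> - <X,Z><Y,W> + <a(X,W),a(Y,Z)> - <a(X,Z),a(Y,W)>.\<close>
definition gauss_R :: "(real^'n \<Rightarrow> real^'n \<Rightarrow> real^'m) \<Rightarrow> real^'n \<Rightarrow> real^'n \<Rightarrow> real^'n \<Rightarrow> real^'n \<Rightarrow> real" where
  "gauss_R \<alpha> X Y Z W = (X \<bullet> W) * (Y \<bullet> Z) - (X \<bullet> Z) * (Y \<bullet> W)
      + \<alpha> X W \<bullet> \<alpha> Y Z - \<alpha> X Z \<bullet> \<alpha> Y W"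

text \<open>Non-normalized Ricci curvature Ric(X) = tr (Y \<mapsto> R(Y,X)X) = sum_b R(b,X,X,b).\<close>
definition Ric :: "(real^'n \<Rightarrow> real^'n \<Rightarrow> real^'m) \<Rightarrow> real^'n \<Rightarrow> real" where
  "Ric \<alpha> X = (\<Sum>b\<in>Basis. gauss_R \<alpha> b X X b)"

definition lam :: "real \<Rightarrow> real \<Rightarrow> real \<Rightarrow> real" where
  "lam n k H = (n * H + sqrt (n\<^sup>2 * H\<^sup>2 + 4 * k * (n - k))) / (2 * k)"

definition bnd :: "real \<Rightarrow> real \<Rightarrow> real \<Rightarrow> real" where
  "bnd n k H = n * (k - 1) / k + n * (k - 1) * H / (2 * k\<^sup>2) * (n * H + sqrt (n\<^sup>2 * H\<^sup>2 + 4 * k * (n - k)))"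

definition Eset :: "(real^'n \<Rightarrow> real^'n \<Rightarrow> real^'m) \<Rightarrow> real^'m \<Rightarrow> (real^'n) set" where
  "Eset \<alpha> \<eta> = {X. \<forall>Y. \<alpha> X Y = (X \<bullet> Y) *\<^sub>R \<eta>}"

definition dupin_normal :: "(real^'n \<Rightarrow> real^'n \<Rightarrow> real^'m) \<Rightarrow> real^'m \<Rightarrow> bool" where
  "dupin_normal \<alpha> \<eta> \<longleftrightarrow> dim (Eset \<alpha> \<eta>) \<ge> 2"

definition onb :: "(nat \<Rightarrow> real^'n) \<Rightarrow> bool" where
  "onb e \<longleftrightarrow> (\<forall>i\<in>{1..CARD('n)}. \<forall>j\<in>{1..CARD('n)}. e i \<bullet> e j = (if i = j then 1 else 0))"

definition lhs :: "(real^'n \<Rightarrow> real^'n \<Rightarrow> real^'m) \<Rightarrow> (nat \<Rightarrow> real^'n) \<Rightarrow> nat \<Rightarrow> real" where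
  "lhs \<alpha> e p = (\<Sum>i\<in>{1..p}. \<Sum>j\<in>{p+1..CARD('n)}.
      2 * (norm (\<alpha> (e i) (e j)))\<^sup>2 - \<alpha> (e i) (e i) \<bullet> \<alpha> (e j) (e j))"

end

theory Submission
  imports Defs "HOL-Analysis.Analysis"
begin



lemma s_le_l:
  fixes u l s t :: real
  assumes "u \<ge> 0" "l > 0" "u \<le> 2*l" "t \<le> u * s" "s^2 - t \<le> l^2 - u*l" "s \<ge> 0"
  shows "s \<le> l"
proof (rule ccontr)
  assume "\<not> s \<le> l"
  then have "s - l > 0" "s + l - u > 0" using assms by auto
  then have "(s - l) * (s + l - u) > 0" by simp
  moreover have "(s - l) * (s + l - u) = s^2 - u * s - (l^2 - u*l)" by (simp add: power2_eq_square algebra_simps)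
  ultimately show False using assms by linarith
qed

lemma lam_facts:
  fixes n k u :: real
  assumes "k \<ge> 2" "n \<ge> 2*k" "u \<ge> 0"
  defines "l \<equiv> (u + sqrt (u^2 + 4*k*(n-k))) / (2*k)"
  shows "l > 0" "k*l^2 - u*l = n - k" "l*n > u"
proof -
  define q where "q = sqrt (u^2 + 4*k*(n-k))"
  have pos: "4*k*(n-k) > 0" using assms by simp
  have nn0: "0 \<le> u^2 + 4*k*(n-k)" using pos zero_le_power2[of u] by linarith
  have q2: "q^2 = u^2 + 4*k*(n-k)" unfolding q_def using nn0 real_sqrt_pow2 by blast
  have q0: "q \<ge> 0" unfolding q_def using nn0 by simp
  have qu: "q > u"
  proof -
    have "q^2 > u^2" using q2 pos by simp
    then show ?thesis using q0 assms(3) by (meson power_less_imp_less_base)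
  qed
  have l: "l = (u + q) / (2*k)" unfolding l_def q_def by simp
  show "l > 0" unfolding l using qu assms by simp
  have "k*l^2 - u*l = ((u+q)^2 - 2*u*(u+q)) / (4*k)" unfolding l using assms
    by (simp add: field_simps power2_eq_square)
  also have "\<dots> = (q^2 - u^2)/(4*k)" by (simp add: power2_eq_square algebra_simps)
  also have "\<dots> = n - k" using q2 assms by (simp add: field_simps)
  finally show "k*l^2 - u*l = n - k" .
  have "l*n = (u+q)*n/(2*k)" unfolding l by simp
  also have "\<dots> > u" using qu assms
  proof -
    have "(u+q)*n \<ge> (u+q)*(2*k)" using qu assms by (intro mult_left_mono) auto
    moreover have "(u+q)*(2*k) - 2*u*k = 2*q*k" by (simp add: algebra_simps)
    moreover have "2*q*k > 0" using qu assms by simp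
    ultimately have "(u+q)*n > 2*u*k" by linarith
    then show ?thesis using assms by (simp add: field_simps)
  qed
  finally show "l*n > u" .
qed

lemma u_le_2l:
  fixes n u l :: real
  assumes "n \<ge> 2" "u \<ge> 0" "l > 0" "l*n > u" "n*(u*l - l^2) \<le> u^2*(n-1)/n"
  shows "u \<le> 2*l"
proof -
  define H where "H = u/n"
  have u: "u = n*H" unfolding H_def using assms by simp
  have H0: "H \<ge> 0" unfolding H_def using assms by simp
  have "u^2*(n-1)/n = n*((n-1)*H^2)" unfolding u using assms(1) by (simp add: power2_eq_square field_simps)
  then have "n*(n*H*l - l^2) \<le> n*((n-1)*H^2)" using assms(5) unfolding u by simp
  then have "n*H*l - l^2 \<le> (n-1)*H^2" using assms(1) by simp
  then have "(l - H)*(l - (n-1)*H) \<ge> 0" by (simp add: power2_eq_square algebra_simps)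
  moreover have "l > H"
  proof -
    have "H * n < l * n" using assms(4) u by (simp add: mult.commute)
    then show ?thesis using assms(1) by simp
  qed
  ultimately have "l - (n-1)*H \<ge> 0" by (simp add: zero_le_mult_iff)
  moreover have "n*H \<le> 2*((n-1)*H)" using H0 assms(1) mult_left_mono[of 2 n H] by (simp add: algebra_simps)
  ultimately show ?thesis using u by linarith
qed

lemma sq_identity:
  fixes a :: "nat \<Rightarrow> 'a::real_inner"
  shows "(\<Sum>i\<in>P. \<Sum>j\<in>P. (a i - a j) \<bullet> (a i - a j)) = 2 * (real (card P) * (\<Sum>i\<in>P. a i \<bullet> a i) - (\<Sum>i\<in>P. a i) \<bullet> (\<Sum>i\<in>P. a i))"
proof -
  have "(\<Sum>i\<in>P. \<Sum>j\<in>P. (a i - a j) \<bullet> (a i - a j)) = (\<Sum>i\<in>P. \<Sum>j\<in>P. a i \<bullet> a i + a j \<bullet> a j - 2 * (a i \<bullet> a j))"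
    by (simp add: inner_diff_left inner_diff_right inner_commute algebra_simps)
  also have "\<dots> = 2 * (real (card P) * (\<Sum>i\<in>P. a i \<bullet> a i) - (\<Sum>i\<in>P. a i) \<bullet> (\<Sum>i\<in>P. a i))"
  proof -
    have e1: "(\<Sum>i\<in>P. \<Sum>j\<in>P. a i \<bullet> a i) = real (card P) * (\<Sum>i\<in>P. a i \<bullet> a i)"
      by (simp add: sum_distrib_left mult.commute)
    have e2: "(\<Sum>i\<in>P. \<Sum>j\<in>P. a j \<bullet> a j) = real (card P) * (\<Sum>i\<in>P. a i \<bullet> a i)"
      by simp
    have e3: "(\<Sum>i\<in>P. \<Sum>j\<in>P. a i \<bullet> a j) = (\<Sum>i\<in>P. a i) \<bullet> (\<Sum>i\<in>P. a i)"
      apply (simp add: inner_sum_left inner_sum_right) by (rule sum.swap)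
    have "(\<Sum>i\<in>P. \<Sum>j\<in>P. a i \<bullet> a i + a j \<bullet> a j - 2 * (a i \<bullet> a j)) =
      (\<Sum>i\<in>P. \<Sum>j\<in>P. a i \<bullet> a i) + (\<Sum>i\<in>P. \<Sum>j\<in>P. a j \<bullet> a j) - 2 * (\<Sum>i\<in>P. \<Sum>j\<in>P. a i \<bullet> a j)"
      by (simp only: sum.distrib sum_subtractf sum_distrib_left)
    then show ?thesis using e1 e2 e3 by simp
  qed
  finally show ?thesis .
qed

lemma Q_le:
  fixes a :: "nat \<Rightarrow> 'a::real_inner"
  shows "(\<Sum>i\<in>P. a i) \<bullet> (\<Sum>i\<in>P. a i) \<le> real (card P) * (\<Sum>i\<in>P. a i \<bullet> a i)"
proof -
  have "0 \<le> (\<Sum>i\<in>P. \<Sum>j\<in>P. (a i - a j) \<bullet> (a i - a j))" by (intro sum_nonneg) simp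
  then show ?thesis unfolding sq_identity by simp
qed

lemma p1_bound:
  fixes n k u l :: real
  assumes "k \<ge> 2" "n \<ge> 2*k" "u \<ge> 0" "l > 0" "k*l^2 - u*l = n - k" "u \<le> 2*l"
  shows "2*l^2 - 2*u*l + u^2/4 < n - 1"
proof -
  have "k*(2*l^2 - 2*u*l + u^2/4) = 2*(k*l^2 - u*l) - 2*(k-1)*u*l + k*u^2/4"
    by (simp add: algebra_simps)
  also have "\<dots> = 2*(n-k) - 2*(k-1)*u*l + k*u^2/4" using assms(5) by simp
  finally have eq: "k*(2*l^2 - 2*u*l + u^2/4) = 2*(n-k) - 2*(k-1)*u*l + k*u^2/4" .
  have "u*u \<le> 2*l*u" using assms(3,6) by (simp add: mult_right_mono)
  then have "k*u^2/4 \<le> k*(2*l*u)/4" using assms(1) by (simp add: power2_eq_square)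
  also have "\<dots> \<le> 2*(k-1)*u*l"
  proof -
    have "k*(2*l*u)/4 = (k/2)*(u*l)" by simp
    also have "\<dots> \<le> (2*(k-1))*(u*l)" using assms by (intro mult_right_mono) auto
    finally show ?thesis by simp
  qed
  finally have "k*u^2/4 \<le> 2*(k-1)*u*l" .
  moreover have "(k-2)*n \<ge> 0" using assms by simp
  ultimately have "k*(2*l^2 - 2*u*l + u^2/4) < k*(n-1)" using eq assms(1) by (simp add: algebra_simps)
  then show ?thesis using assms(1) by simp
qed




locale setting =
  fixes \<alpha> :: "real^'n \<Rightarrow> real^'n \<Rightarrow> real^'m" and e :: "nat \<Rightarrow> real^'n"
  assumes sff: "sff \<alpha>" and onb: "onb e"
begin


lemma linL: "linear (\<lambda>X. \<alpha> X Y)" using sff unfolding sff_def by blast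
lemma linR: "linear (\<alpha> X)" using sff unfolding sff_def by blast
lemma sym: "\<alpha> X Y = \<alpha> Y X" using sff unfolding sff_def by blast

lemma addL: "\<alpha> (X + Z) Y = \<alpha> X Y + \<alpha> Z Y" using linear_add[OF linL] by blast
lemma addR: "\<alpha> Y (X + Z) = \<alpha> Y X + \<alpha> Y Z" using linear_add[OF linR] by blast
lemma scaleL: "\<alpha> (c *\<^sub>R X) Y = c *\<^sub>R \<alpha> X Y" using linear_scale[OF linL] by blast
lemma scaleR: "\<alpha> Y (c *\<^sub>R X) = c *\<^sub>R \<alpha> Y X" using linear_scale[OF linR] by blast
lemma sumL: "\<alpha> (sum f S) Y = (\<Sum>i\<in>S. \<alpha> (f i) Y)" using linear_sum[OF linL] by blast
lemma sumR: "\<alpha> Y (sum f S) = (\<Sum>i\<in>S. \<alpha> Y (f i))" using linear_sum[OF linR] by blast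

lemma ortho: "i \<in> {1..CARD('n)} \<Longrightarrow> j \<in> {1..CARD('n)} \<Longrightarrow> e i \<bullet> e j = (if i = j then 1 else 0)"
  using onb unfolding onb_def by blast

lemma inj_e: "inj_on e {1..CARD('n)}"
  by (rule inj_onI) (metis ortho zero_neq_one)

lemma e_nz: "i \<in> {1..CARD('n)} \<Longrightarrow> e i \<noteq> 0"
  using ortho[of i i] by auto

lemma indep: "independent (e ` {1..CARD('n)})"
proof (rule pairwise_orthogonal_independent)
  show "pairwise orthogonal (e ` {1..CARD('n)})"
    unfolding pairwise_def orthogonal_def using ortho by auto
  show "0 \<notin> e ` {1..CARD('n)}" using e_nz by auto
qed

lemma span_all: "span (e ` {1..CARD('n)}) = UNIV"
proof -
  have "card (e ` {1..CARD('n)}) = CARD('n)" using card_image[OF inj_e] by simp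
  then have "UNIV \<subseteq> span (e ` {1..CARD('n)})"
    using card_ge_dim_independent[OF _ indep, of UNIV] by simp
  then show ?thesis by auto
qed

lemma expand: "x = (\<Sum>i\<in>{1..CARD('n)}. (x \<bullet> e i) *\<^sub>R e i)"
proof -
  define d where "d = x - (\<Sum>i\<in>{1..CARD('n)}. (x \<bullet> e i) *\<^sub>R e i)"
  have o: "d \<bullet> e j = 0" if "j \<in> {1..CARD('n)}" for j
  proof -
    have "(\<Sum>i\<in>{1..CARD('n)}. (x \<bullet> e i) *\<^sub>R e i) \<bullet> e j = (\<Sum>i\<in>{1..CARD('n)}. (x \<bullet> e i) * (e i \<bullet> e j))"
      by (simp add: inner_sum_left)
    also have "\<dots> = (\<Sum>i\<in>{1..CARD('n)}. if i = j then x \<bullet> e j else 0)"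
      by (rule sum.cong) (use that ortho in auto)
    also have "\<dots> = x \<bullet> e j" using that by simp
    finally show ?thesis unfolding d_def by (simp add: inner_diff_left)
  qed
  have "orthogonal d d"
    by (rule orthogonal_to_span[of _ "e ` {1..CARD('n)}"]) (use span_all o in \<open>auto simp: orthogonal_def\<close>)
  then have "d = 0" by (simp add: orthogonal_def)
  then show ?thesis unfolding d_def by simp
qed

lemma parseval: "(\<Sum>i\<in>{1..CARD('n)}. (x \<bullet> e i) * (y \<bullet> e i)) = x \<bullet> y"
proof -
  have "x \<bullet> y = x \<bullet> (\<Sum>i\<in>{1..CARD('n)}. (y \<bullet> e i) *\<^sub>R e i)" using expand[of y] by simp
  also have "\<dots> = (\<Sum>i\<in>{1..CARD('n)}. (x \<bullet> e i) * (y \<bullet> e i))" by (simp add: inner_sum_right mult.commute)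
  finally show ?thesis by simp
qed

lemma trace:
  fixes f :: "real^'n \<Rightarrow> real^'n \<Rightarrow> 'a::real_vector"
  assumes l1: "\<And>Y. linear (\<lambda>X. f X Y)" and l2: "\<And>X. linear (f X)"
  shows "(\<Sum>b\<in>Basis. f b b) = (\<Sum>i\<in>{1..CARD('n)}. f (e i) (e i))"
proof -
  have "(\<Sum>b\<in>Basis. f b b) = (\<Sum>b\<in>Basis. \<Sum>i\<in>{1..CARD('n)}. (b \<bullet> e i) *\<^sub>R f (e i) b)"
  proof (rule sum.cong[OF refl])
    fix b :: "real^'n"
    have "f b b = f (\<Sum>i\<in>{1..CARD('n)}. (b \<bullet> e i) *\<^sub>R e i) b" using expand[of b] by simp
    also have "\<dots> = (\<Sum>i\<in>{1..CARD('n)}. (b \<bullet> e i) *\<^sub>R f (e i) b)"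
      by (simp add: linear_sum[OF l1] linear_scale[OF l1])
    finally show "f b b = \<dots>" .
  qed
  also have "\<dots> = (\<Sum>i\<in>{1..CARD('n)}. \<Sum>b\<in>Basis. (b \<bullet> e i) *\<^sub>R f (e i) b)" by (rule sum.swap)
  also have "\<dots> = (\<Sum>i\<in>{1..CARD('n)}. f (e i) (\<Sum>b\<in>Basis. (e i \<bullet> b) *\<^sub>R b))"
    by (simp add: linear_sum[OF l2] linear_scale[OF l2] inner_commute)
  also have "\<dots> = (\<Sum>i\<in>{1..CARD('n)}. f (e i) (e i))" by (simp add: euclidean_representation)
  finally show ?thesis .
qed

definition N where "N = (\<Sum>b\<in>Basis. \<alpha> b b)"

lemma lin_inner_l: "linear (\<lambda>u. \<alpha> u X \<bullet> w)"
  by (rule linearI) (simp_all add: addL scaleL inner_add_left)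
lemma lin_inner_r: "linear (\<lambda>u. w \<bullet> \<alpha> u X)"
  by (rule linearI) (simp_all add: addL scaleL inner_add_right)

lemma N_e: "N = (\<Sum>i\<in>{1..CARD('n)}. \<alpha> (e i) (e i))"
  unfolding N_def by (rule trace) (simp_all add: linL linR)

lemma meanvec_N: "meanvec \<alpha> = (1 / real CARD('n)) *\<^sub>R N"
  unfolding meanvec_def N_def by simp

lemma meancurv_N: "meancurv \<alpha> = norm N / real CARD('n)"
  unfolding meancurv_def meanvec_N by simp

lemma Ric_formula:
  "Ric \<alpha> X = (real CARD('n) - 1) * (X \<bullet> X) + \<alpha> X X \<bullet> N
      - (\<Sum>i\<in>{1..CARD('n)}. \<alpha> (e i) X \<bullet> \<alpha> (e i) X)"
proof -
  have s1: "(\<Sum>b\<in>(Basis::(real^'n) set). (b \<bullet> b) * (X \<bullet> X)) = real CARD('n) * (X \<bullet> X)"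
  proof -
    have "(\<Sum>b\<in>(Basis::(real^'n) set). (b \<bullet> b) * (X \<bullet> X)) = (\<Sum>i\<in>{1..CARD('n)}. (e i \<bullet> e i) * (X \<bullet> X))"
      by (rule trace[of "\<lambda>u v. (u \<bullet> v) * (X \<bullet> X)"]) (simp_all add: linearI inner_add_left inner_add_right algebra_simps)
    also have "\<dots> = (\<Sum>i\<in>{1..CARD('n)}. (X \<bullet> X))" by (rule sum.cong) (simp_all add: ortho)
    finally show ?thesis by simp
  qed
  have s2: "(\<Sum>b\<in>Basis. (b \<bullet> X) * (X \<bullet> b)) = X \<bullet> X"
  proof -
    have "(\<Sum>b\<in>Basis. (b \<bullet> X) * (X \<bullet> b)) = (\<Sum>i\<in>{1..CARD('n)}. (e i \<bullet> X) * (X \<bullet> e i))"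
      by (rule trace[of "\<lambda>u v. (u \<bullet> X) * (X \<bullet> v)"]) (simp_all add: linearI inner_add_left inner_add_right algebra_simps)
    also have "\<dots> = X \<bullet> X" using parseval[of X X] by (simp add: inner_commute)
    finally show ?thesis .
  qed
  have s3: "(\<Sum>b\<in>Basis. \<alpha> b b \<bullet> \<alpha> X X) = \<alpha> X X \<bullet> N"
    unfolding N_def by (simp add: inner_sum_right inner_commute)
  have s4: "(\<Sum>b\<in>Basis. \<alpha> b X \<bullet> \<alpha> X b) = (\<Sum>i\<in>{1..CARD('n)}. \<alpha> (e i) X \<bullet> \<alpha> (e i) X)"
  proof -
    have "(\<Sum>b\<in>Basis. \<alpha> b X \<bullet> \<alpha> X b) = (\<Sum>b\<in>Basis. \<alpha> b X \<bullet> \<alpha> b X)" by (simp add: sym[of X])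
    also have "\<dots> = (\<Sum>i\<in>{1..CARD('n)}. \<alpha> (e i) X \<bullet> \<alpha> (e i) X)"
      by (rule trace[of "\<lambda>u v. \<alpha> u X \<bullet> \<alpha> v X"]) (simp_all add: lin_inner_l lin_inner_r)
    finally show ?thesis .
  qed
  have "Ric \<alpha> X = (\<Sum>b\<in>(Basis::(real^'n) set). (b \<bullet> b) * (X \<bullet> X)) - (\<Sum>b\<in>Basis. (b \<bullet> X) * (X \<bullet> b))
     + (\<Sum>b\<in>Basis. \<alpha> b b \<bullet> \<alpha> X X) - (\<Sum>b\<in>Basis. \<alpha> b X \<bullet> \<alpha> X b)"
    unfolding Ric_def gauss_R_def by (simp add: sum.distrib sum_subtractf)
  then show ?thesis using s1 s2 s3 s4 by (simp add: algebra_simps)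
qed

definition a where "a i = \<alpha> (e i) (e i)"
definition AA where "AA p = (\<Sum>i\<in>{1..p}. a i)"
definition Dof where "Dof p i = (\<Sum>j\<in>{1..p}-{i}. \<alpha> (e j) (e i) \<bullet> \<alpha> (e j) (e i))"
definition Ooff where "Ooff i = (\<Sum>j\<in>{1..CARD('n)}-{i}. \<alpha> (e j) (e i) \<bullet> \<alpha> (e j) (e i))"

lemma Ooff_nonneg: "Ooff i \<ge> 0" unfolding Ooff_def by (intro sum_nonneg) simp
lemma Dof_nonneg: "Dof p i \<ge> 0" unfolding Dof_def by (intro sum_nonneg) simp
lemma Dof_le_OO: "p \<le> CARD('n) \<Longrightarrow> Dof p i \<le> Ooff i"
  unfolding Dof_def Ooff_def by (rule sum_mono2) auto

lemma Ric_e: assumes "i \<in> {1..CARD('n)}"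
  shows "Ric \<alpha> (e i) = (real CARD('n) - 1) + a i \<bullet> N - a i \<bullet> a i - Ooff i"
proof -
  have "(\<Sum>j\<in>{1..CARD('n)}. \<alpha> (e j) (e i) \<bullet> \<alpha> (e j) (e i)) = a i \<bullet> a i + Ooff i"
    unfolding Ooff_def a_def using assms by (subst sum.remove[of _ i]) auto
  then show ?thesis using Ric_formula[of "e i"] ortho[OF assms assms] by (simp add: a_def)
qed

lemma N_split: assumes "p \<le> CARD('n)"
  shows "N = AA p + (\<Sum>j\<in>{p+1..CARD('n)}. a j)"
proof -
  have "{1..CARD('n)} = {1..p} \<union> {p+1..CARD('n)}" using assms by auto
  then show ?thesis unfolding N_e AA_def a_def
    by (simp add: sum.union_disjoint[symmetric] del: Un_iff)
qed

lemma lhs_formula: assumes "p \<le> CARD('n)"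
  shows "lhs \<alpha> e p = (\<Sum>i\<in>{1..p}. 2 * (real CARD('n) - 1) - 2 * Ric \<alpha> (e i) + a i \<bullet> N
            - 2 * (a i \<bullet> a i) - 2 * Dof p i) + AA p \<bullet> AA p"
proof -
  have inner: "(\<Sum>j\<in>{p+1..CARD('n)}. 2 * (norm (\<alpha> (e i) (e j)))\<^sup>2 - \<alpha> (e i) (e i) \<bullet> \<alpha> (e j) (e j))
     = 2 * (real CARD('n) - 1) - 2 * Ric \<alpha> (e i) + a i \<bullet> N
            - 2 * (a i \<bullet> a i) - 2 * Dof p i + a i \<bullet> AA p" if i: "i \<in> {1..p}" for i
  proof -
    have iI: "i \<in> {1..CARD('n)}" using i assms by auto
    have split: "{1..CARD('n)} - {i} = ({1..p} - {i}) \<union> {p+1..CARD('n)}" using i assms by auto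
    have O: "Ooff i = Dof p i + (\<Sum>j\<in>{p+1..CARD('n)}. \<alpha> (e j) (e i) \<bullet> \<alpha> (e j) (e i))"
      unfolding Ooff_def Dof_def split by (rule sum.union_disjoint) auto
    have s1: "(\<Sum>j\<in>{p+1..CARD('n)}. 2 * (norm (\<alpha> (e i) (e j)))\<^sup>2) = 2 * (Ooff i - Dof p i)"
      using O by (simp add: sum_distrib_left[symmetric] power2_norm_eq_inner sym[of "e i"])
    have s2: "(\<Sum>j\<in>{p+1..CARD('n)}. \<alpha> (e i) (e i) \<bullet> \<alpha> (e j) (e j)) = a i \<bullet> (N - AA p)"
      using N_split[OF assms] by (simp add: a_def inner_sum_right)
    show ?thesis using s1 s2 Ric_e[OF iI] by (simp add: sum_subtractf inner_diff_right algebra_simps)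
  qed
  have "lhs \<alpha> e p = (\<Sum>i\<in>{1..p}. (2 * (real CARD('n) - 1) - 2 * Ric \<alpha> (e i) + a i \<bullet> N
            - 2 * (a i \<bullet> a i) - 2 * Dof p i) + a i \<bullet> AA p)"
    unfolding lhs_def by (rule sum.cong[OF refl]) (rule inner)
  also have "\<dots> = (\<Sum>i\<in>{1..p}. 2 * (real CARD('n) - 1) - 2 * Ric \<alpha> (e i) + a i \<bullet> N
            - 2 * (a i \<bullet> a i) - 2 * Dof p i) + AA p \<bullet> AA p"
    by (simp add: sum.distrib AA_def inner_sum_left)
  finally show ?thesis .
qed

end




locale setting2 = setting \<alpha> e for \<alpha> :: "real^'n \<Rightarrow> real^'n \<Rightarrow> real^'m" and e +
  fixes k :: nat
  assumes k2: "2 \<le> k" and kn: "2 * k \<le> CARD('n)"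
    and ric: "\<forall>X. norm X = 1 \<longrightarrow> Ric \<alpha> X \<ge> bnd (real CARD('n)) (real k) (meancurv \<alpha>)"
begin

definition "uu = norm N"
definition "ll = lam (real CARD('n)) (real k) (meancurv \<alpha>)"
definition "bb = bnd (real CARD('n)) (real k) (meancurv \<alpha>)"

lemma n_pos: "real CARD('n) > 0" by simp

lemma ll_expr: "ll = (uu + sqrt (uu^2 + 4 * real k * (real CARD('n) - real k))) / (2 * real k)"
proof -
  have "real CARD('n) * meancurv \<alpha> = uu" unfolding meancurv_N uu_def by simp
  then show ?thesis unfolding ll_def lam_def by (simp add: power_mult_distrib[symmetric])
qed

lemma uu_nonneg: "uu \<ge> 0" unfolding uu_def by simp

lemma kr: "real k \<ge> 2" "real CARD('n) \<ge> 2 * real k" using k2 kn by auto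

lemma ll_facts: "ll > 0" "real k * ll^2 - uu * ll = real CARD('n) - real k" "ll * real CARD('n) > uu"
  using lam_facts[OF kr(1) kr(2) uu_nonneg] unfolding ll_expr[symmetric] by auto

lemma bb_eq: "bb = real CARD('n) - 1 - ll^2 + uu * ll"
proof -
  have h1: "real CARD('n) * meancurv \<alpha> = uu" unfolding meancurv_N uu_def by simp
  have h2: "(real CARD('n))\<^sup>2 * (meancurv \<alpha>)\<^sup>2 = uu^2" using h1 by (simp add: power_mult_distrib[symmetric])
  have sq: "sqrt ((real CARD('n))\<^sup>2 * (meancurv \<alpha>)\<^sup>2 + 4 * real k * (real CARD('n) - real k)) = 2 * real k * ll - uu"
    unfolding h2 ll_expr using kr by (simp add: field_simps)
  have "bb = real CARD('n) * (real k - 1) / real k + real CARD('n) * (real k - 1) * meancurv \<alpha> / (2 * (real k)\<^sup>2) * (2 * real k * ll)"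
    unfolding bb_def bnd_def sq h1 by simp
  also have "\<dots> = real CARD('n) * (real k - 1) / real k + (real k - 1) / real k * uu * ll"
    using kr h1[symmetric] by (simp add: field_simps power2_eq_square)
  finally have b1: "bb = real CARD('n) * (real k - 1) / real k + (real k - 1) / real k * uu * ll" .
  have kl: "real k * ll^2 = uu * ll + real CARD('n) - real k" using ll_facts(2) by (simp add: algebra_simps)
  have k1: "real k * bb = real CARD('n) * (real k - 1) + (real k - 1) * uu * ll"
    unfolding b1 using kr by (simp add: field_simps)
  have k2: "real k * (real CARD('n) - 1 - ll^2 + uu * ll) = real k * real CARD('n) - real k - real k * ll^2 + real k * uu * ll"
    by (simp add: algebra_simps)
  have "real k * bb = real k * (real CARD('n) - 1 - ll^2 + uu * ll)"
    unfolding k1 k2 kl by (simp add: algebra_simps)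
  then show ?thesis using kr by simp
qed

lemma e_unit: "i \<in> {1..CARD('n)} \<Longrightarrow> norm (e i) = 1"
  using ortho[of i i] by (simp add: norm_eq_sqrt_inner)

lemma ric_e: "i \<in> {1..CARD('n)} \<Longrightarrow> Ric \<alpha> (e i) \<ge> bb"
  using ric e_unit unfolding bb_def by blast

lemma tN_le: "a i \<bullet> N \<le> uu * norm (a i)"
  unfolding uu_def using norm_cauchy_schwarz[of "a i" N] by (simp add: mult.commute)

lemma s2t: assumes "i \<in> {1..CARD('n)}" shows "(norm (a i))^2 - a i \<bullet> N \<le> ll^2 - uu * ll"
  using ric_e[OF assms] Ric_e[OF assms] Ooff_nonneg[of i] bb_eq by (simp add: power2_norm_eq_inner)

lemma u_le: "uu \<le> 2 * ll"
proof -
  have "(\<Sum>i\<in>{1..CARD('n)}. bb) \<le> (\<Sum>i\<in>{1..CARD('n)}. Ric \<alpha> (e i))"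
    by (rule sum_mono) (rule ric_e)
  also have "\<dots> = (\<Sum>i\<in>{1..CARD('n)}. (real CARD('n) - 1) + a i \<bullet> N - a i \<bullet> a i - Ooff i)"
    by (rule sum.cong) (simp_all add: Ric_e)
  also have "\<dots> \<le> (\<Sum>i\<in>{1..CARD('n)}. (real CARD('n) - 1) + a i \<bullet> N - a i \<bullet> a i)"
    by (rule sum_mono) (simp add: Ooff_nonneg)
  also have "\<dots> = real CARD('n) * (real CARD('n) - 1) + N \<bullet> N - (\<Sum>i\<in>{1..CARD('n)}. a i \<bullet> a i)"
  proof -
    have "(\<Sum>i\<in>{1..CARD('n)}. a i) = N" using N_e a_def by simp
    then have "(\<Sum>i\<in>{1..CARD('n)}. a i \<bullet> N) = N \<bullet> N" by (simp only: inner_sum_left[symmetric])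
    then show ?thesis by (simp add: sum.distrib sum_subtractf)
  qed
  finally have A: "real CARD('n) * bb \<le> real CARD('n) * (real CARD('n) - 1) + uu^2 - (\<Sum>i\<in>{1..CARD('n)}. a i \<bullet> a i)"
    by (simp add: uu_def power2_norm_eq_inner)
  have "N \<bullet> N \<le> real CARD('n) * (\<Sum>i\<in>{1..CARD('n)}. a i \<bullet> a i)"
    using Q_le[of a "{1..CARD('n)}"] unfolding N_e a_def by simp
  then have B: "uu^2 / real CARD('n) \<le> (\<Sum>i\<in>{1..CARD('n)}. a i \<bullet> a i)"
    using n_pos by (simp add: uu_def power2_norm_eq_inner field_simps)
  have C: "real CARD('n) * bb \<le> real CARD('n) * (real CARD('n) - 1) + uu^2 - uu^2 / real CARD('n)"
    using A B by linarith
  have D: "real CARD('n) * bb = real CARD('n) * (real CARD('n) - 1) - real CARD('n) * (ll^2 - uu * ll)"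
    unfolding bb_eq by (simp add: algebra_simps)
  have E: "uu^2 - uu^2 / real CARD('n) = uu^2 * (real CARD('n) - 1) / real CARD('n)"
    using n_pos by (simp add: field_simps)
  have "real CARD('n) * (uu * ll - ll^2) \<le> uu^2 * (real CARD('n) - 1) / real CARD('n)"
    using C D E by (simp add: algebra_simps)
  then show ?thesis using u_le_2l[of "real CARD('n)" uu ll] kr uu_nonneg ll_facts by linarith
qed

definition "sg p i = uu * (ll - norm (a i)) + (uu * norm (a i) - a i \<bullet> N) + (real p - 2) * (ll^2 - (norm (a i))^2)"

lemma k_le_n: "k \<le> CARD('n)" using kn by simp

lemma s_le_ll: "i \<in> {1..CARD('n)} \<Longrightarrow> norm (a i) \<le> ll"
  using s_le_l[OF uu_nonneg ll_facts(1) u_le tN_le] s2t by simp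

lemma sg_nonneg: assumes "i \<in> {1..CARD('n)}" "2 \<le> p" shows "sg p i \<ge> 0"
proof -
  have s: "norm (a i) \<le> ll" using s_le_ll[OF assms(1)] .
  have "norm (a i)^2 \<le> ll^2" using s by (simp add: power_mono)
  then have "(real p - 2) * (ll^2 - (norm (a i))^2) \<ge> 0" using assms(2) by simp
  moreover have "uu * (ll - norm (a i)) \<ge> 0" using s uu_nonneg by simp
  moreover have "uu * norm (a i) - a i \<bullet> N \<ge> 0" using tN_le[of i] by simp
  ultimately show ?thesis unfolding sg_def by linarith
qed

lemma decomp: assumes "2 \<le> p" "p \<le> k"
  shows "lhs \<alpha> e p = real p * (real CARD('n) - real p) - real p * (real k - real p) * (1 + ll^2)
     - 2 * (\<Sum>i\<in>{1..p}. Ric \<alpha> (e i) - bb) - 2 * (\<Sum>i\<in>{1..p}. Dof p i) - (\<Sum>i\<in>{1..p}. sg p i)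
     - (real p * (\<Sum>i\<in>{1..p}. a i \<bullet> a i) - AA p \<bullet> AA p)"
proof -
  have pn: "p \<le> CARD('n)" using assms k_le_n by simp
  have kl: "real k * ll^2 = uu * ll + real CARD('n) - real k" using ll_facts(2) by (simp add: algebra_simps)
  have pt: "2 * (real CARD('n) - 1) - 2 * Ric \<alpha> (e i) + a i \<bullet> N - 2 * (a i \<bullet> a i) - 2 * Dof p i
     = ((real CARD('n) - real p) - (real k - real p) * (1 + ll^2)) - 2 * (Ric \<alpha> (e i) - bb) - 2 * Dof p i
       - sg p i - real p * (a i \<bullet> a i)" for i
  proof -
    have "(norm (a i))^2 = a i \<bullet> a i" by (simp add: power2_norm_eq_inner)
    then show ?thesis unfolding sg_def bb_eq using kl by (simp add: algebra_simps)
  qed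
  have "lhs \<alpha> e p = (\<Sum>i\<in>{1..p}. ((real CARD('n) - real p) - (real k - real p) * (1 + ll^2)) - 2 * (Ric \<alpha> (e i) - bb) - 2 * Dof p i
       - sg p i - real p * (a i \<bullet> a i)) + AA p \<bullet> AA p"
    unfolding lhs_formula[OF pn] pt ..
  also have "\<dots> = real p * (real CARD('n) - real p) - real p * (real k - real p) * (1 + ll^2)
     - 2 * (\<Sum>i\<in>{1..p}. Ric \<alpha> (e i) - bb) - 2 * (\<Sum>i\<in>{1..p}. Dof p i) - (\<Sum>i\<in>{1..p}. sg p i)
     - (real p * (\<Sum>i\<in>{1..p}. a i \<bullet> a i) - AA p \<bullet> AA p)"
    by (simp add: sum_subtractf sum.distrib sum_distrib_left[symmetric] algebra_simps)
  finally show ?thesis .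
qed

lemma p1: "lhs \<alpha> e 1 < real CARD('n) - 1"
proof -
  have pn: "1 \<le> CARD('n)" using k_le_n k2 by simp
  have I1: "(1::nat) \<in> {1..CARD('n)}" using pn by simp
  have D0: "Dof 1 1 = 0" unfolding Dof_def by simp
  have "lhs \<alpha> e 1 = 2 * (real CARD('n) - 1) - 2 * Ric \<alpha> (e 1) + a 1 \<bullet> N - 2 * (a 1 \<bullet> a 1) + a 1 \<bullet> a 1"
    unfolding lhs_formula[OF pn] AA_def by (simp add: Dof_def)
  also have "\<dots> \<le> 2 * (real CARD('n) - 1) - 2 * bb + uu * norm (a 1) - (norm (a 1))^2"
    using ric_e[OF I1] tN_le[of 1] by (simp add: power2_norm_eq_inner)
  also have "\<dots> \<le> 2 * ll^2 - 2 * uu * ll + uu^2 / 4"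
  proof -
    have "uu * norm (a 1) - (norm (a 1))^2 \<le> uu^2/4"
      using zero_le_power2[of "norm (a 1) - uu/2"] by (simp add: power2_eq_square algebra_simps)
    then show ?thesis unfolding bb_eq by simp
  qed
  also have "\<dots> < real CARD('n) - 1"
    using p1_bound[OF kr uu_nonneg ll_facts(1) ll_facts(2) u_le] .
  finally show ?thesis .
qed

lemma sub_I: "p \<le> k \<Longrightarrow> i \<in> {1..p} \<Longrightarrow> i \<in> {1..CARD('n)}" using k_le_n by auto

lemma terms_nonneg: assumes "2 \<le> p" "p \<le> k"
  shows "(\<Sum>i\<in>{1..p}. Ric \<alpha> (e i) - bb) \<ge> Ric \<alpha> (e 1) - bb"
    "(\<Sum>i\<in>{1..p}. Ric \<alpha> (e i) - bb) \<ge> 0"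
    "(\<Sum>i\<in>{1..p}. Dof p i) \<ge> 0" "(\<Sum>i\<in>{1..p}. sg p i) \<ge> 0"
    "real p * (\<Sum>i\<in>{1..p}. a i \<bullet> a i) - AA p \<bullet> AA p \<ge> 0"
    "real p * (real k - real p) * (1 + ll^2) \<ge> 0"
proof -
  have r: "\<And>i. i \<in> {1..p} \<Longrightarrow> Ric \<alpha> (e i) - bb \<ge> 0" using ric_e sub_I[OF assms(2)] by fastforce
  show "(\<Sum>i\<in>{1..p}. Ric \<alpha> (e i) - bb) \<ge> Ric \<alpha> (e 1) - bb"
    by (rule member_le_sum) (use r assms in auto)
  show "(\<Sum>i\<in>{1..p}. Ric \<alpha> (e i) - bb) \<ge> 0" by (rule sum_nonneg) (rule r)
  show "(\<Sum>i\<in>{1..p}. Dof p i) \<ge> 0" by (rule sum_nonneg) (rule Dof_nonneg)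
  show "(\<Sum>i\<in>{1..p}. sg p i) \<ge> 0" by (rule sum_nonneg) (use sg_nonneg sub_I[OF assms(2)] assms(1) in blast)
  show "real p * (\<Sum>i\<in>{1..p}. a i \<bullet> a i) - AA p \<bullet> AA p \<ge> 0"
    using Q_le[of a "{1..p}"] unfolding AA_def by simp
  show "real p * (real k - real p) * (1 + ll^2) \<ge> 0" using assms by simp
qed

lemma real_pn: "p \<le> CARD('n) \<Longrightarrow> real (p * (CARD('n) - p)) = real p * (real CARD('n) - real p)"
  by (simp add: of_nat_diff)

lemma main_le: assumes "1 \<le> p" "p \<le> k"
  shows "lhs \<alpha> e p \<le> real (p * (CARD('n) - p))"
    "p < k \<Longrightarrow> lhs \<alpha> e p < real (p * (CARD('n) - p))"
    "Ric \<alpha> (e 1) > bb \<Longrightarrow> lhs \<alpha> e p < real (p * (CARD('n) - p))"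
proof -
  have pn: "p \<le> CARD('n)" using assms k_le_n by simp
  have "lhs \<alpha> e p < real (p * (CARD('n) - p)) \<or> (2 \<le> p \<and> lhs \<alpha> e p \<le> real (p * (CARD('n) - p)))"
  proof (cases "p = 1")
    case True then show ?thesis using p1 real_pn[OF pn] by simp
  next
    case False
    then have p2: "2 \<le> p" using assms by simp
    show ?thesis using decomp[OF p2 assms(2)] terms_nonneg[OF p2 assms(2)] p2 unfolding real_pn[OF pn] by linarith
  qed
  then show "lhs \<alpha> e p \<le> real (p * (CARD('n) - p))" by linarith
  show "lhs \<alpha> e p < real (p * (CARD('n) - p))" if "p < k"
  proof (cases "p = 1")
    case True then show ?thesis using p1 real_pn[OF pn] by simp
  next
    case False
    then have p2: "2 \<le> p" using assms by simp
    have "real p * (real k - real p) * (1 + ll^2) > 0" using that p2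
      by (simp add: add_pos_nonneg)
    then show ?thesis using decomp[OF p2 assms(2)] terms_nonneg[OF p2 assms(2)] unfolding real_pn[OF pn] by linarith
  qed
  show "lhs \<alpha> e p < real (p * (CARD('n) - p))" if "Ric \<alpha> (e 1) > bb"
  proof (cases "p = 1")
    case True then show ?thesis using p1 real_pn[OF pn] by simp
  next
    case False
    then have p2: "2 \<le> p" using assms by simp
    show ?thesis using that decomp[OF p2 assms(2)] terms_nonneg[OF p2 assms(2)] unfolding real_pn[OF pn] by linarith
  qed
qed

lemma eq_extract: assumes "1 \<le> p" "p \<le> k" "lhs \<alpha> e p = real (p * (CARD('n) - p))"
  shows "p = k" "\<forall>i\<in>{1..k}. Ric \<alpha> (e i) = bb" "\<forall>i\<in>{1..k}. Dof k i = 0"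
    "\<forall>i\<in>{1..k}. sg k i = 0" "\<forall>i\<in>{1..k}. a i = a 1"
proof -
  show pk: "p = k" using main_le(2)[OF assms(1,2)] assms(2,3) by fastforce
  have kn': "k \<le> CARD('n)" using k_le_n .
  have k2': "2 \<le> k" using k2 .
  note d = decomp[OF k2' order_refl] and t = terms_nonneg[OF k2' order_refl]
  have L: "lhs \<alpha> e k = real k * (real CARD('n) - real k)" using assms(3) pk real_pn[OF kn'] by simp
  have z1: "(\<Sum>i\<in>{1..k}. Ric \<alpha> (e i) - bb) = 0" and z2: "(\<Sum>i\<in>{1..k}. Dof k i) = 0"
    and z3: "(\<Sum>i\<in>{1..k}. sg k i) = 0" and z4: "real k * (\<Sum>i\<in>{1..k}. a i \<bullet> a i) - AA k \<bullet> AA k = 0"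
  proof -
    have T0: "real k * (real k - real k) * (1 + ll^2) = 0" by simp
    show "(\<Sum>i\<in>{1..k}. Ric \<alpha> (e i) - bb) = 0" using d t L T0 by linarith
    show "(\<Sum>i\<in>{1..k}. Dof k i) = 0" using d t L T0 by linarith
    show "(\<Sum>i\<in>{1..k}. sg k i) = 0" using d t L T0 by linarith
    show "real k * (\<Sum>i\<in>{1..k}. a i \<bullet> a i) - AA k \<bullet> AA k = 0" using d t L T0 by linarith
  qed
  have r: "\<And>i. i \<in> {1..k} \<Longrightarrow> Ric \<alpha> (e i) - bb \<ge> 0" using ric_e sub_I[of k] by fastforce
  show "\<forall>i\<in>{1..k}. Ric \<alpha> (e i) = bb" using z1 sum_nonneg_eq_0_iff[of "{1..k}" "\<lambda>i. Ric \<alpha> (e i) - bb"] r by simp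
  show "\<forall>i\<in>{1..k}. Dof k i = 0" using z2 sum_nonneg_eq_0_iff[of "{1..k}" "Dof k"] Dof_nonneg by simp
  show "\<forall>i\<in>{1..k}. sg k i = 0" using z3 sum_nonneg_eq_0_iff[of "{1..k}" "sg k"] sg_nonneg sub_I[of k] k2 by fastforce
  have "(\<Sum>i\<in>{1..k}. \<Sum>j\<in>{1..k}. (a i - a j) \<bullet> (a i - a j)) = 0"
    using z4 unfolding sq_identity AA_def by simp
  then have h1: "\<forall>i\<in>{1..k}. (\<Sum>j\<in>{1..k}. (a i - a j) \<bullet> (a i - a j)) = 0"
    using sum_nonneg_eq_0_iff[of "{1..k}" "\<lambda>i. \<Sum>j\<in>{1..k}. (a i - a j) \<bullet> (a i - a j)"]
    by (simp add: sum_nonneg)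
  have "\<forall>i\<in>{1..k}. \<forall>j\<in>{1..k}. (a i - a j) \<bullet> (a i - a j) = 0"
  proof (intro ballI)
    fix i j assume i: "i \<in> {1..k}" and j: "j \<in> {1..k}"
    have "(\<Sum>j\<in>{1..k}. (a i - a j) \<bullet> (a i - a j)) = 0" using h1 i by blast
    then show "(a i - a j) \<bullet> (a i - a j) = 0"
      using sum_nonneg_eq_0_iff[of "{1..k}" "\<lambda>j. (a i - a j) \<bullet> (a i - a j)"] j by simp
  qed
  moreover have one: "(1::nat) \<in> {1..k}" using k2 by simp
  ultimately have "\<forall>i\<in>{1..k}. (a i - a 1) \<bullet> (a i - a 1) = 0" by blast
  then show "\<forall>i\<in>{1..k}. a i = a 1"
  proof (intro ballI)
    fix i assume "i \<in> {1..k}"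
    then have "(a i - a 1) \<bullet> (a i - a 1) = 0" using \<open>\<forall>i\<in>{1..k}. (a i - a 1) \<bullet> (a i - a 1) = 0\<close> by blast
    then have "a i - a 1 = 0" by (rule iffD1[OF inner_eq_zero_iff])
    then show "a i = a 1" by (rule iffD1[OF right_minus_eq])
  qed
qed

lemma sg_zero: assumes "i \<in> {1..CARD('n)}" "sg k i = 0" "k = 2 \<longrightarrow> uu \<noteq> 0"
  shows "norm (a i) = ll" "a i \<bullet> N = uu * ll"
proof -
  have s: "norm (a i) \<le> ll" using s_le_ll[OF assms(1)] .
  have A: "uu * (ll - norm (a i)) \<ge> 0" using s uu_nonneg by simp
  have B: "uu * norm (a i) - a i \<bullet> N \<ge> 0" using tN_le[of i] by simp
  have "norm (a i)^2 \<le> ll^2" using s by (simp add: power_mono)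
  then have C: "(real k - 2) * (ll^2 - (norm (a i))^2) \<ge> 0" using k2 by simp
  have zA: "uu * (ll - norm (a i)) = 0" and zB: "uu * norm (a i) - a i \<bullet> N = 0"
    and zC: "(real k - 2) * (ll^2 - (norm (a i))^2) = 0"
    using A B C assms(2) unfolding sg_def by linarith+
  show "norm (a i) = ll"
  proof (cases "uu = 0")
    case True
    then have "k \<noteq> 2" using assms(3) by blast
    then have "real k - 2 \<noteq> 0" using k2 by simp
    then have "ll^2 = (norm (a i))^2" using zC by simp
    then show ?thesis using ll_facts(1) by (simp add: power2_eq_iff_nonneg)
  next
    case False
    then show ?thesis using zA by simp
  qed
  then show "a i \<bullet> N = uu * ll" using zB by simp
qed

lemma Ooff_zero: assumes "i \<in> {1..CARD('n)}" "Ric \<alpha> (e i) = bb" "norm (a i) = ll" "a i \<bullet> N = uu * ll"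
  shows "\<forall>j\<in>{1..CARD('n)}. j \<noteq> i \<longrightarrow> \<alpha> (e j) (e i) = 0"
proof -
  have "Ooff i = 0" using Ric_e[OF assms(1)] assms(2,3,4) bb_eq by (simp add: power2_norm_eq_inner[symmetric])
  then have "\<forall>j\<in>{1..CARD('n)}-{i}. \<alpha> (e j) (e i) \<bullet> \<alpha> (e j) (e i) = 0"
    unfolding Ooff_def using sum_nonneg_eq_0_iff[of "{1..CARD('n)}-{i}" "\<lambda>j. \<alpha> (e j) (e i) \<bullet> \<alpha> (e j) (e i)"] by simp
  then show ?thesis
  proof (intro ballI impI)
    fix j assume "j \<in> {1..CARD('n)}" "j \<noteq> i"
    then have "\<alpha> (e j) (e i) \<bullet> \<alpha> (e j) (e i) = 0" using \<open>\<forall>j\<in>{1..CARD('n)}-{i}. \<alpha> (e j) (e i) \<bullet> \<alpha> (e j) (e i) = 0\<close> by blast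
    then show "\<alpha> (e j) (e i) = 0" by (rule iffD1[OF inner_eq_zero_iff])
  qed
qed

end




context setting
begin

lemma subL: "subspace {X. \<alpha> X Y = (X \<bullet> Y) *\<^sub>R \<eta>}"
  unfolding subspace_def
  by (simp add: addL scaleL inner_add_left scaleR_add_left linear_0[OF linL])

lemma Eset_subspace: "subspace (Eset \<alpha> \<eta>)"
  unfolding subspace_def Eset_def
  by (simp add: addL scaleL inner_add_left scaleR_add_left linear_0[OF linL])

lemma EsetD: "X \<in> Eset \<alpha> \<eta> \<Longrightarrow> \<alpha> X Y = (X \<bullet> Y) *\<^sub>R \<eta>"
  unfolding Eset_def by blast

lemma bil_ext: assumes "\<forall>x\<in>S. \<forall>y\<in>S. \<alpha> x y = (x \<bullet> y) *\<^sub>R \<eta>"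
  shows "\<forall>X\<in>span S. \<forall>Y\<in>span S. \<alpha> X Y = (X \<bullet> Y) *\<^sub>R \<eta>"
proof (intro ballI)
  fix X Y assume X: "X \<in> span S" and Y: "Y \<in> span S"
  have step1: "\<alpha> x Y = (x \<bullet> Y) *\<^sub>R \<eta>" if x: "x \<in> S" for x
  proof -
    have "S \<subseteq> {Y. \<alpha> Y x = (Y \<bullet> x) *\<^sub>R \<eta>}" using assms x by (auto simp: sym inner_commute)
    then have "span S \<subseteq> {Y. \<alpha> Y x = (Y \<bullet> x) *\<^sub>R \<eta>}" by (rule span_minimal[OF _ subL])
    then show ?thesis using Y by (auto simp: sym inner_commute)
  qed
  have "S \<subseteq> {X. \<alpha> X Y = (X \<bullet> Y) *\<^sub>R \<eta>}" using step1 by auto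
  then have "span S \<subseteq> {X. \<alpha> X Y = (X \<bullet> Y) *\<^sub>R \<eta>}" by (rule span_minimal[OF _ subL])
  then show "\<alpha> X Y = (X \<bullet> Y) *\<^sub>R \<eta>" using X by auto
qed

lemma e_in_Eset: assumes "i \<in> {1..CARD('n)}" "\<forall>j\<in>{1..CARD('n)}. \<alpha> (e i) (e j) = (if j = i then \<eta> else 0)"
  shows "e i \<in> Eset \<alpha> \<eta>"
  unfolding Eset_def
proof (intro CollectI allI)
  fix Y
  have "\<alpha> (e i) Y = \<alpha> (e i) (\<Sum>j\<in>{1..CARD('n)}. (Y \<bullet> e j) *\<^sub>R e j)" using expand[of Y] by simp
  also have "\<dots> = (\<Sum>j\<in>{1..CARD('n)}. (Y \<bullet> e j) *\<^sub>R \<alpha> (e i) (e j))" by (simp add: sumR scaleR)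
  also have "\<dots> = (\<Sum>j\<in>{1..CARD('n)}. if j = i then (Y \<bullet> e i) *\<^sub>R \<eta> else 0)"
    by (rule sum.cong) (use assms(2) in auto)
  also have "\<dots> = (Y \<bullet> e i) *\<^sub>R \<eta>" using assms(1) by simp
  finally show "\<alpha> (e i) Y = (e i \<bullet> Y) *\<^sub>R \<eta>" by (simp add: inner_commute)
qed

lemma dupin_from: assumes "2 \<le> kk" "kk \<le> CARD('n)" "span (e ` {1..kk}) \<subseteq> Eset \<alpha> \<eta>"
  shows "dupin_normal \<alpha> \<eta>"
proof -
  let ?B = "{e 1, e 2}"
  have sub: "?B \<subseteq> e ` {1..CARD('n)}" using assms by auto
  have ind: "independent ?B" using independent_mono[OF indep sub] .
  have o1: "e 1 \<bullet> e 2 = 0" using ortho[of 1 2] assms by simp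
  have o2: "e 1 \<bullet> e 1 = 1" using ortho[of 1 1] assms by simp
  have "e 1 \<noteq> e 2"
  proof
    assume "e 1 = e 2"
    then have "e 1 \<bullet> e 1 = e 1 \<bullet> e 2" by simp
    then show False using o1 o2 by simp
  qed
  then have c: "card ?B = 2" by simp
  have "?B \<subseteq> span (e ` {1..kk})" using assms by (auto intro: span_base)
  then have "?B \<subseteq> Eset \<alpha> \<eta>" using assms(3) by blast
  then have "card ?B \<le> dim (Eset \<alpha> \<eta>)" using independent_card_le_dim ind by blast
  then show ?thesis unfolding dupin_normal_def using c by simp
qed

lemma Ric_E: assumes "X \<in> Eset \<alpha> \<eta>" "norm X = 1"
  shows "Ric \<alpha> X = (real CARD('n) - 1) + \<eta> \<bullet> N - \<eta> \<bullet> \<eta>"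
proof -
  have XX: "X \<bullet> X = 1" using assms(2) by (simp add: norm_eq_1)
  have "(\<Sum>i\<in>{1..CARD('n)}. \<alpha> (e i) X \<bullet> \<alpha> (e i) X) = (\<Sum>i\<in>{1..CARD('n)}. (X \<bullet> e i) * (X \<bullet> e i)) * (\<eta> \<bullet> \<eta>)"
    by (simp add: sym[of "e _" X] EsetD[OF assms(1)] sum_distrib_right mult.assoc)
  also have "\<dots> = \<eta> \<bullet> \<eta>" using parseval[of X X] XX by simp
  finally have S: "(\<Sum>i\<in>{1..CARD('n)}. \<alpha> (e i) X \<bullet> \<alpha> (e i) X) = \<eta> \<bullet> \<eta>" .
  have A: "\<alpha> X X = \<eta>" using EsetD[OF assms(1), of X] XX by simp
  show ?thesis unfolding Ric_formula[of X] S A XX by simp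
qed

end

context setting2
begin

lemma one_in: "(1::nat) \<in> {1..k}" using k2 by simp

lemma ii_ric: assumes "span (e ` {1..k}) \<subseteq> Eset \<alpha> \<eta>" "norm \<eta> = ll"
  shows "\<eta> \<bullet> N = uu * ll" "\<forall>X\<in>span (e ` {1..k}). norm X = 1 \<longrightarrow> Ric \<alpha> X = bb"
    "collinear {0, \<eta>, meanvec \<alpha>}"
proof -
  have e1: "e 1 \<in> Eset \<alpha> \<eta>" using assms(1) span_base[OF imageI[OF one_in, of e]] by blast
  have I1: "(1::nat) \<in> {1..CARD('n)}" using one_in k_le_n by auto
  have "Ric \<alpha> (e 1) \<ge> bb" using ric_e[OF I1] .
  then have ge: "\<eta> \<bullet> N \<ge> uu * ll" using Ric_E[OF e1 e_unit[OF I1]] bb_eq assms(2)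
    by (simp add: power2_norm_eq_inner[symmetric])
  have le: "\<eta> \<bullet> N \<le> uu * ll" using norm_cauchy_schwarz[of \<eta> N] assms(2) unfolding uu_def by (simp add: mult.commute)
  show eq: "\<eta> \<bullet> N = uu * ll" using ge le by simp
  show "\<forall>X\<in>span (e ` {1..k}). norm X = 1 \<longrightarrow> Ric \<alpha> X = bb"
  proof (intro ballI impI)
    fix X assume "X \<in> span (e ` {1..k})" "norm X = 1"
    then show "Ric \<alpha> X = bb" using Ric_E[of X \<eta>] assms eq bb_eq by (auto simp: power2_norm_eq_inner[symmetric])
  qed
  have "\<bar>\<eta> \<bullet> meanvec \<alpha>\<bar> = norm \<eta> * norm (meanvec \<alpha>)"
    unfolding meanvec_N using eq assms(2) uu_nonneg ll_facts(1) by (simp add: uu_def)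
  then show "collinear {0, \<eta>, meanvec \<alpha>}" using norm_cauchy_schwarz_equal by blast
qed

lemma ii_if: assumes "span (e ` {1..k}) \<subseteq> Eset \<alpha> \<eta>" "norm \<eta> = ll"
  shows "lhs \<alpha> e k = real (k * (CARD('n) - k))"
proof -
  have inE: "e i \<in> Eset \<alpha> \<eta>" if "i \<in> {1..k}" for i using assms(1) span_base[OF imageI[OF that, of e]] by blast
  have iI: "i \<in> {1..CARD('n)}" if "i \<in> {1..k}" for i using that k_le_n by auto
  have ai: "a i = \<eta>" if "i \<in> {1..k}" for i
    unfolding a_def using EsetD[OF inE[OF that], of "e i"] ortho[OF iI[OF that] iI[OF that]] by simp
  have R: "(\<Sum>i\<in>{1..k}. Ric \<alpha> (e i) - bb) = 0"
  proof (rule sum.neutral, rule ballI)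
    fix i assume i: "i \<in> {1..k}"
    have "e i \<in> span (e ` {1..k})" using span_base[OF imageI[OF i, of e]] .
    then show "Ric \<alpha> (e i) - bb = 0" using ii_ric(2)[OF assms] e_unit[OF iI[OF i]] by simp
  qed
  have D: "(\<Sum>i\<in>{1..k}. Dof k i) = 0"
  proof (rule sum.neutral, rule ballI)
    fix i assume i: "i \<in> {1..k}"
    show "Dof k i = 0" unfolding Dof_def
    proof (rule sum.neutral, rule ballI)
      fix j assume j: "j \<in> {1..k} - {i}"
      have "\<alpha> (e j) (e i) = (e j \<bullet> e i) *\<^sub>R \<eta>" using EsetD[OF inE] j by simp
      also have "\<dots> = 0" using ortho[OF iI iI] i j by auto
      finally show "\<alpha> (e j) (e i) \<bullet> \<alpha> (e j) (e i) = 0" by simp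
    qed
  qed
  have S: "(\<Sum>i\<in>{1..k}. sg k i) = 0"
    by (rule sum.neutral) (use ai ii_ric(1)[OF assms] assms(2) in \<open>auto simp: sg_def\<close>)
  have Q: "real k * (\<Sum>i\<in>{1..k}. a i \<bullet> a i) - AA k \<bullet> AA k = 0"
  proof -
    have "(\<Sum>i\<in>{1..k}. a i \<bullet> a i) = real k * (\<eta> \<bullet> \<eta>)" using ai by simp
    moreover have "AA k = real k *\<^sub>R \<eta>"
    proof -
      have "AA k = (\<Sum>i\<in>{1..k}. \<eta>)" unfolding AA_def by (rule sum.cong) (use ai in auto)
      also have "\<dots> = real (card {1..k}) *\<^sub>R \<eta>" by (rule sum_constant_scaleR)
      finally show ?thesis by simp
    qed
    ultimately show ?thesis by simp
  qed
  have T0: "real k * (real k - real k) * (1 + ll^2) = 0" by simp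
  show ?thesis using decomp[OF k2 order_refl] R D S Q T0 unfolding real_pn[OF k_le_n] by linarith
qed

lemma ii_onlyif: assumes "k = 2 \<longrightarrow> meancurv \<alpha> \<noteq> 0" "1 \<le> p" "p \<le> k" "lhs \<alpha> e p = real (p * (CARD('n) - p))"
  shows "p = k \<and> (\<exists>\<eta>. dupin_normal \<alpha> \<eta> \<and> norm \<eta> = ll \<and> span (e ` {1..k}) \<subseteq> Eset \<alpha> \<eta>)"
proof -
  note E = eq_extract[OF assms(2,3,4)]
  have iI: "i \<in> {1..CARD('n)}" if "i \<in> {1..k}" for i using that k_le_n by auto
  have hu: "k = 2 \<longrightarrow> uu \<noteq> 0" using assms(1) unfolding meancurv_N uu_def by auto
  define \<eta> where "\<eta> = a 1"
  have nz: "norm (a i) = ll" and tz: "a i \<bullet> N = uu * ll" if "i \<in> {1..k}" for i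
    using sg_zero[OF iI[OF that] _ hu] E(4) that by auto
  have off: "\<forall>j\<in>{1..CARD('n)}. j \<noteq> i \<longrightarrow> \<alpha> (e j) (e i) = 0" if "i \<in> {1..k}" for i
    using Ooff_zero[OF iI[OF that]] E(2) nz tz that by auto
  have inE: "e i \<in> Eset \<alpha> \<eta>" if i: "i \<in> {1..k}" for i
  proof (rule e_in_Eset[OF iI[OF i]], rule ballI)
    fix j assume j: "j \<in> {1..CARD('n)}"
    show "\<alpha> (e i) (e j) = (if j = i then \<eta> else 0)"
    proof (cases "j = i")
      case True
      have "a i = a 1" using E(5) i by blast
      then show ?thesis using True unfolding \<eta>_def a_def by simp
    next
      case False
      have "\<alpha> (e j) (e i) = 0" using off[OF i] j False by blast
      then show ?thesis using False sym[of "e i" "e j"] by simp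
    qed
  qed
  have sp: "span (e ` {1..k}) \<subseteq> Eset \<alpha> \<eta>"
    by (rule span_minimal[OF _ Eset_subspace]) (use inE in auto)
  have "norm \<eta> = ll" unfolding \<eta>_def using nz one_in by simp
  moreover have "dupin_normal \<alpha> \<eta>" using dupin_from[OF k2 k_le_n sp] .
  ultimately show ?thesis using E(1) sp by blast
qed

end

context setting
begin

definition "SS j l = (\<Sum>i\<in>{1..CARD('n)}. \<alpha> (e i) (e j) \<bullet> \<alpha> (e i) (e l))"

lemma span12: assumes "X \<in> span (e ` {1..2})" shows "\<exists>x y. X = x *\<^sub>R e 1 + y *\<^sub>R e 2"
proof -
  have "e ` {1..2} = {e 1, e 2}" by (auto simp: numeral_2_eq_2 le_Suc_eq)
  then have "X \<in> span (insert (e 1) {e 2})" using assms by simp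
  then obtain x where "X - x *\<^sub>R e 1 \<in> span {e 2}" using span_breakdown_eq by blast
  then obtain y where "X - x *\<^sub>R e 1 = y *\<^sub>R e 2" using span_singleton by blast
  then have "X = x *\<^sub>R e 1 + y *\<^sub>R e 2" by (simp add: algebra_simps)
  then show ?thesis by blast
qed

lemma inner12: assumes "2 \<le> CARD('n)"
  shows "(x *\<^sub>R e 1 + y *\<^sub>R e 2) \<bullet> (x *\<^sub>R e 1 + y *\<^sub>R e 2) = x^2 + y^2"
proof -
  have o: "e 1 \<bullet> e 1 = 1" "e 2 \<bullet> e 2 = 1" "e 1 \<bullet> e 2 = 0" "e 2 \<bullet> e 1 = 0"
    using ortho[of 1 1] ortho[of 2 2] ortho[of 1 2] ortho[of 2 1] assms by auto
  show ?thesis by (simp only: inner_add_left inner_add_right inner_scaleR_left inner_scaleR_right o) (simp add: power2_eq_square)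
qed

lemma Ric_comb: assumes "N = 0" "2 \<le> CARD('n)"
  shows "Ric \<alpha> (x *\<^sub>R e 1 + y *\<^sub>R e 2) = (real CARD('n) - 1) * (x^2 + y^2)
            - (x^2 * SS 1 1 + 2 * x * y * SS 1 2 + y^2 * SS 2 2)"
proof -
  let ?X = "x *\<^sub>R e 1 + y *\<^sub>R e 2"
  have t: "\<alpha> (e i) ?X \<bullet> \<alpha> (e i) ?X = x^2 * (\<alpha> (e i) (e 1) \<bullet> \<alpha> (e i) (e 1))
     + 2 * x * y * (\<alpha> (e i) (e 1) \<bullet> \<alpha> (e i) (e 2)) + y^2 * (\<alpha> (e i) (e 2) \<bullet> \<alpha> (e i) (e 2))" for i
    by (simp add: addR scaleR inner_add_left inner_add_right inner_commute power2_eq_square algebra_simps)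
  have "(\<Sum>i\<in>{1..CARD('n)}. \<alpha> (e i) ?X \<bullet> \<alpha> (e i) ?X) = x^2 * SS 1 1 + 2 * x * y * SS 1 2 + y^2 * SS 2 2"
    unfolding t SS_def by (simp add: sum.distrib sum_distrib_left)
  then show ?thesis unfolding Ric_formula[of ?X] inner12[OF assms(2)] using assms(1) by simp
qed

end

context setting2
begin

lemma iii_forward: assumes "uu = 0" "k = 2" "1 \<le> p" "p \<le> 2" "lhs \<alpha> e p = real (p * (CARD('n) - p))"
  shows "p = 2" "\<exists>\<eta>. norm \<eta> \<le> ll \<and> (\<forall>X\<in>span (e ` {1..2}). \<forall>Y\<in>span (e ` {1..2}). \<alpha> X Y = (X \<bullet> Y) *\<^sub>R \<eta>)"
    "\<forall>X\<in>span (e ` {1..2}). norm X = 1 \<longrightarrow> Ric \<alpha> X = bb"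
proof -
  note E = eq_extract[OF assms(3) _ assms(5)]
  have pk: "p \<le> k" using assms by simp
  show "p = 2" using E(1)[OF pk] assms(2) by simp
  have n2: "2 \<le> CARD('n)" using k_le_n assms(2) by simp
  have I1: "(1::nat) \<in> {1..CARD('n)}" and I2: "(2::nat) \<in> {1..CARD('n)}" using n2 by auto
  have K1: "(1::nat) \<in> {1..k}" and K2: "(2::nat) \<in> {1..k}" using assms(2) by auto
  have a21: "a 2 = a 1" using E(5)[OF pk] K2 by blast
  have "Dof k 1 = 0" using E(3)[OF pk] K1 by blast
  moreover have "{1..2::nat} - {1} = {2}" by auto
  ultimately have "\<alpha> (e 2) (e 1) \<bullet> \<alpha> (e 2) (e 1) = 0" unfolding Dof_def assms(2) by simp
  then have a12: "\<alpha> (e 2) (e 1) = 0" by (rule iffD1[OF inner_eq_zero_iff])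
  define \<eta> where "\<eta> = a 1"
  have base: "\<forall>x\<in>e ` {1..2}. \<forall>y\<in>e ` {1..2}. \<alpha> x y = (x \<bullet> y) *\<^sub>R \<eta>"
  proof -
    have s: "e ` {1..2} = {e 1, e 2}" by (auto simp: numeral_2_eq_2 le_Suc_eq)
    have o: "e 1 \<bullet> e 1 = 1" "e 2 \<bullet> e 2 = 1" "e 1 \<bullet> e 2 = 0" "e 2 \<bullet> e 1 = 0"
      using ortho[OF I1 I1] ortho[OF I2 I2] ortho[OF I1 I2] ortho[OF I2 I1] by auto
    have "\<alpha> (e 1) (e 2) = 0" using a12 sym[of "e 1" "e 2"] by simp
    then show ?thesis unfolding s using o a12 a21 unfolding \<eta>_def a_def by auto
  qed
  have "norm \<eta> \<le> ll" unfolding \<eta>_def using s_le_ll[OF I1] .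
  then show "\<exists>\<eta>. norm \<eta> \<le> ll \<and> (\<forall>X\<in>span (e ` {1..2}). \<forall>Y\<in>span (e ` {1..2}). \<alpha> X Y = (X \<bullet> Y) *\<^sub>R \<eta>)"
    using bil_ext[OF base] by blast
  have N0: "N = 0" using assms(1) unfolding uu_def by simp
  have R1: "Ric \<alpha> (e 1) = bb" and R2: "Ric \<alpha> (e 2) = bb" using E(2)[OF pk] K1 K2 by auto
  have c10: "Ric \<alpha> (1 *\<^sub>R e 1 + 0 *\<^sub>R e 2) = bb" and c01: "Ric \<alpha> (0 *\<^sub>R e 1 + 1 *\<^sub>R e 2) = bb"
    using R1 R2 by simp_all
  have S11: "SS 1 1 = real CARD('n) - 1 - bb" using c10 unfolding Ric_comb[OF N0 n2] by simp
  have S22: "SS 2 2 = real CARD('n) - 1 - bb" using c01 unfolding Ric_comb[OF N0 n2] by simp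
  define r where "r = 1 / sqrt 2"
  have r2: "r^2 = 1/2" unfolding r_def by (simp add: power_divide)
  have rr: "r * (r * z) = z / 2" for z using r2 by (simp add: power2_eq_square mult.assoc[symmetric])
  have unit: "norm (x *\<^sub>R e 1 + y *\<^sub>R e 2) = 1" if "x^2 + y^2 = 1" for x y
    using inner12[OF n2, of x y] that by (simp add: norm_eq_sqrt_inner)
  have "Ric \<alpha> (r *\<^sub>R e 1 + r *\<^sub>R e 2) \<ge> bb" using ric unit[of r r] r2 unfolding bb_def by simp
  then have S12a: "SS 1 2 \<le> 0" unfolding Ric_comb[OF N0 n2] S11 S22 r2 by (simp add: algebra_simps power2_eq_square[symmetric] r2 rr)
  have "Ric \<alpha> (r *\<^sub>R e 1 + (-r) *\<^sub>R e 2) \<ge> bb" using ric unit[of r "-r"] r2 unfolding bb_def by simp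
  then have S12b: "SS 1 2 \<ge> 0" unfolding Ric_comb[OF N0 n2] S11 S22 by (simp add: algebra_simps power2_eq_square[symmetric] r2 rr)
  show "\<forall>X\<in>span (e ` {1..2}). norm X = 1 \<longrightarrow> Ric \<alpha> X = bb"
  proof (intro ballI impI)
    fix X assume X: "X \<in> span (e ` {1..2})" "norm X = 1"
    obtain x y where xy: "X = x *\<^sub>R e 1 + y *\<^sub>R e 2" using span12[OF X(1)] by blast
    have "x^2 + y^2 = 1" using X(2) inner12[OF n2, of x y] xy by (simp add: norm_eq_1)
    note h = this
    have S12: "SS 1 2 = 0" using S12a S12b by linarith
    have "Ric \<alpha> X = (x^2 + y^2) * bb" unfolding xy Ric_comb[OF N0 n2] S11 S22 S12
      by (simp add: algebra_simps)
    then show "Ric \<alpha> X = bb" using h by simp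
  qed
qed

lemma iii_backward: assumes "uu = 0" "k = 2"
    "\<forall>X\<in>span (e ` {1..2}). \<forall>Y\<in>span (e ` {1..2}). \<alpha> X Y = (X \<bullet> Y) *\<^sub>R \<eta>"
    "\<forall>X\<in>span (e ` {1..2}). norm X = 1 \<longrightarrow> Ric \<alpha> X = bb"
  shows "lhs \<alpha> e 2 = real (2 * (CARD('n) - 2))"
proof -
  have N0: "N = 0" using assms(1) unfolding uu_def by simp
  have sp: "e i \<in> span (e ` {1..2})" if "i \<in> {1..k}" for i using that assms(2) span_base[of "e i" "e ` {1..2}"] by auto
  have iI: "i \<in> {1..CARD('n)}" if "i \<in> {1..k}" for i using that k_le_n by auto
  have al: "\<alpha> (e j) (e i) = (e j \<bullet> e i) *\<^sub>R \<eta>" if "i \<in> {1..k}" "j \<in> {1..k}" for i j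
    using assms(3) sp[OF that(1)] sp[OF that(2)] by blast
  have ai: "a i = \<eta>" if "i \<in> {1..k}" for i
    unfolding a_def using al[OF that that] ortho[OF iI[OF that] iI[OF that]] by simp
  have R: "(\<Sum>i\<in>{1..k}. Ric \<alpha> (e i) - bb) = 0"
  proof (rule sum.neutral, rule ballI)
    fix i assume i: "i \<in> {1..k}"
    show "Ric \<alpha> (e i) - bb = 0" using assms(4) sp[OF i] e_unit[OF iI[OF i]] by simp
  qed
  have D: "(\<Sum>i\<in>{1..k}. Dof k i) = 0"
  proof (rule sum.neutral, rule ballI)
    fix i assume i: "i \<in> {1..k}"
    show "Dof k i = 0" unfolding Dof_def
    proof (rule sum.neutral, rule ballI)
      fix j assume j: "j \<in> {1..k} - {i}"
      have "\<alpha> (e j) (e i) = (e j \<bullet> e i) *\<^sub>R \<eta>" using al i j by simp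
      also have "\<dots> = 0" using ortho[OF iI iI] i j by auto
      finally show "\<alpha> (e j) (e i) \<bullet> \<alpha> (e j) (e i) = 0" by simp
    qed
  qed
  have S: "(\<Sum>i\<in>{1..k}. sg k i) = 0"
  proof (rule sum.neutral, rule ballI)
    fix i assume "i \<in> {1..k}"
    have "real k - 2 = 0" using assms(2) by simp
    then show "sg k i = 0" unfolding sg_def using N0 assms(1) by simp
  qed
  have Q: "real k * (\<Sum>i\<in>{1..k}. a i \<bullet> a i) - AA k \<bullet> AA k = 0"
  proof -
    have "(\<Sum>i\<in>{1..k}. a i \<bullet> a i) = real k * (\<eta> \<bullet> \<eta>)" using ai by simp
    moreover have "AA k = real k *\<^sub>R \<eta>"
    proof -
      have "AA k = (\<Sum>i\<in>{1..k}. \<eta>)" unfolding AA_def by (rule sum.cong) (use ai in auto)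
      also have "\<dots> = real (card {1..k}) *\<^sub>R \<eta>" by (rule sum_constant_scaleR)
      finally show ?thesis by simp
    qed
    ultimately show ?thesis by simp
  qed
  have T0: "real k * (real k - real k) * (1 + ll^2) = 0" by simp
  have "lhs \<alpha> e k = real (k * (CARD('n) - k))"
    using decomp[OF k2 order_refl] R D S Q T0 unfolding real_pn[OF k_le_n] by linarith
  then show ?thesis using assms(2) by simp
qed

end




theorem proposition5:
  fixes \<alpha> :: "real^'n \<Rightarrow> real^'n \<Rightarrow> real^'m" and k :: nat
  assumes "sff \<alpha>"
    and "2 \<le> k" and "2 * k \<le> CARD('n)"
    and ric: "\<forall>X. norm X = 1 \<longrightarrow> Ric \<alpha> X \<ge> bnd (real CARD('n)) (real k) (meancurv \<alpha>)"
  shows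
    \<comment> \<open>(i)\<close>
    "(\<forall>e p. onb e \<and> 1 \<le> p \<and> p \<le> k \<longrightarrow>
         lhs \<alpha> e p \<le> real (p * (CARD('n) - p))) \<and>
     (\<forall>e p. onb e \<and> 1 \<le> p \<and> p < k \<longrightarrow>
         lhs \<alpha> e p < real (p * (CARD('n) - p))) \<and>
     ((\<forall>X. norm X = 1 \<longrightarrow> Ric \<alpha> X > bnd (real CARD('n)) (real k) (meancurv \<alpha>)) \<longrightarrow>
        (\<forall>e. onb e \<longrightarrow> lhs \<alpha> e k < real (k * (CARD('n) - k))))
     \<comment> \<open>(ii)\<close>
     \<and> ((k = 2 \<longrightarrow> meancurv \<alpha> \<noteq> 0) \<longrightarrow>
        (\<forall>e p. onb e \<and> 1 \<le> p \<and> p \<le> k \<longrightarrow>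
           (lhs \<alpha> e p = real (p * (CARD('n) - p)) \<longleftrightarrow>
             p = k \<and> (\<exists>\<eta>. dupin_normal \<alpha> \<eta> \<and>
                 norm \<eta> = lam (real CARD('n)) (real k) (meancurv \<alpha>) \<and>
                 span (e ` {1..k}) \<subseteq> Eset \<alpha> \<eta>))) \<and>
        (\<forall>e \<eta>. onb e \<and> lhs \<alpha> e k = real (k * (CARD('n) - k)) \<and> dupin_normal \<alpha> \<eta> \<and>
             norm \<eta> = lam (real CARD('n)) (real k) (meancurv \<alpha>) \<and>
             span (e ` {1..k}) \<subseteq> Eset \<alpha> \<eta> \<longrightarrow>
           (\<forall>X\<in>span (e ` {1..k}). norm X = 1 \<longrightarrow>
               Ric \<alpha> X = bnd (real CARD('n)) (real k) (meancurv \<alpha>)) \<and>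
           (meancurv \<alpha> \<noteq> 0 \<longrightarrow> collinear {0, \<eta>, meanvec \<alpha>})))
     \<comment> \<open>(iii)\<close>
     \<and> (meancurv \<alpha> = 0 \<and> k = 2 \<longrightarrow>
        (\<forall>e p. onb e \<and> 1 \<le> p \<and> p \<le> 2 \<longrightarrow>
           (lhs \<alpha> e p = real (p * (CARD('n) - p)) \<longleftrightarrow>
             p = 2 \<and>
             (\<exists>\<eta>. norm \<eta> \<le> lam (real CARD('n)) 2 0 \<and>
                (\<forall>X\<in>span (e ` {1..2}). \<forall>Y\<in>span (e ` {1..2}). \<alpha> X Y = (X \<bullet> Y) *\<^sub>R \<eta>)) \<and>
             (\<forall>X\<in>span (e ` {1..2}). norm X = 1 \<longrightarrow>
                Ric \<alpha> X = bnd (real CARD('n)) 2 0))))"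
proof -
  have S: "setting2 \<alpha> e k" if "onb e" for e :: "nat \<Rightarrow> real^'n"
    using assms that unfolding setting2_def setting_def setting2_axioms_def by auto
  have i1: "\<forall>e p. onb e \<and> 1 \<le> p \<and> p \<le> k \<longrightarrow> lhs \<alpha> e p \<le> real (p * (CARD('n) - p))"
  proof (intro allI impI)
    fix e :: "nat \<Rightarrow> real^'n" and p :: nat assume h: "onb e \<and> 1 \<le> p \<and> p \<le> k"
    interpret S: setting2 \<alpha> e k using S h by blast
    show "lhs \<alpha> e p \<le> real (p * (CARD('n) - p))" using S.main_le(1) h by blast
  qed
  have i2: "\<forall>e p. onb e \<and> 1 \<le> p \<and> p < k \<longrightarrow> lhs \<alpha> e p < real (p * (CARD('n) - p))"
  proof (intro allI impI)
    fix e :: "nat \<Rightarrow> real^'n" and p :: nat assume h: "onb e \<and> 1 \<le> p \<and> p < k"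
    interpret S: setting2 \<alpha> e k using S h by blast
    show "lhs \<alpha> e p < real (p * (CARD('n) - p))" using S.main_le(2)[of p] h by auto
  qed
  have i3: "(\<forall>X. norm X = 1 \<longrightarrow> Ric \<alpha> X > bnd (real CARD('n)) (real k) (meancurv \<alpha>)) \<longrightarrow>
        (\<forall>e. onb e \<longrightarrow> lhs \<alpha> e k < real (k * (CARD('n) - k)))"
  proof (intro allI impI)
    fix e :: "nat \<Rightarrow> real^'n" assume hs: "\<forall>X. norm X = 1 \<longrightarrow> Ric \<alpha> X > bnd (real CARD('n)) (real k) (meancurv \<alpha>)" and h: "onb e"
    interpret S: setting2 \<alpha> e k using S h by blast
    have "(1::nat) \<in> {1..CARD('n)}" using S.one_in S.k_le_n by auto
    then have "Ric \<alpha> (e 1) > S.bb" using hs S.e_unit unfolding S.bb_def by blast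
    then show "lhs \<alpha> e k < real (k * (CARD('n) - k))" using S.main_le(3)[of k] assms(2) by simp
  qed
  have ii: "(k = 2 \<longrightarrow> meancurv \<alpha> \<noteq> 0) \<longrightarrow>
        (\<forall>e p. onb e \<and> 1 \<le> p \<and> p \<le> k \<longrightarrow>
           (lhs \<alpha> e p = real (p * (CARD('n) - p)) \<longleftrightarrow>
             p = k \<and> (\<exists>\<eta>. dupin_normal \<alpha> \<eta> \<and>
                 norm \<eta> = lam (real CARD('n)) (real k) (meancurv \<alpha>) \<and>
                 span (e ` {1..k}) \<subseteq> Eset \<alpha> \<eta>))) \<and>
        (\<forall>e \<eta>. onb e \<and> lhs \<alpha> e k = real (k * (CARD('n) - k)) \<and> dupin_normal \<alpha> \<eta> \<and>
             norm \<eta> = lam (real CARD('n)) (real k) (meancurv \<alpha>) \<and>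
             span (e ` {1..k}) \<subseteq> Eset \<alpha> \<eta> \<longrightarrow>
           (\<forall>X\<in>span (e ` {1..k}). norm X = 1 \<longrightarrow>
               Ric \<alpha> X = bnd (real CARD('n)) (real k) (meancurv \<alpha>)) \<and>
           (meancurv \<alpha> \<noteq> 0 \<longrightarrow> collinear {0, \<eta>, meanvec \<alpha>}))"
  proof (intro impI conjI allI)
    fix e :: "nat \<Rightarrow> real^'n" and p :: nat assume hk: "k = 2 \<longrightarrow> meancurv \<alpha> \<noteq> 0" and h: "onb e \<and> 1 \<le> p \<and> p \<le> k"
    interpret S: setting2 \<alpha> e k using S h by blast
    show "lhs \<alpha> e p = real (p * (CARD('n) - p)) \<longleftrightarrow>
             p = k \<and> (\<exists>\<eta>. dupin_normal \<alpha> \<eta> \<and>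
                 norm \<eta> = lam (real CARD('n)) (real k) (meancurv \<alpha>) \<and>
                 span (e ` {1..k}) \<subseteq> Eset \<alpha> \<eta>)"
    proof
      assume "lhs \<alpha> e p = real (p * (CARD('n) - p))"
      then show "p = k \<and> (\<exists>\<eta>. dupin_normal \<alpha> \<eta> \<and>
                 norm \<eta> = lam (real CARD('n)) (real k) (meancurv \<alpha>) \<and>
                 span (e ` {1..k}) \<subseteq> Eset \<alpha> \<eta>)"
        using S.ii_onlyif[OF hk] h unfolding S.ll_def by blast
    next
      assume "p = k \<and> (\<exists>\<eta>. dupin_normal \<alpha> \<eta> \<and>
                 norm \<eta> = lam (real CARD('n)) (real k) (meancurv \<alpha>) \<and>
                 span (e ` {1..k}) \<subseteq> Eset \<alpha> \<eta>)"
      then obtain \<eta> where "p = k" "norm \<eta> = S.ll" "span (e ` {1..k}) \<subseteq> Eset \<alpha> \<eta>"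
        unfolding S.ll_def by blast
      then show "lhs \<alpha> e p = real (p * (CARD('n) - p))" using S.ii_if by blast
    qed
  next
    fix e :: "nat \<Rightarrow> real^'n" and \<eta> :: "real^'m" assume hk: "k = 2 \<longrightarrow> meancurv \<alpha> \<noteq> 0" and h: "onb e \<and> lhs \<alpha> e k = real (k * (CARD('n) - k)) \<and> dupin_normal \<alpha> \<eta> \<and>
             norm \<eta> = lam (real CARD('n)) (real k) (meancurv \<alpha>) \<and>
             span (e ` {1..k}) \<subseteq> Eset \<alpha> \<eta>"
    interpret S: setting2 \<alpha> e k using S h by blast
    have a: "span (e ` {1..k}) \<subseteq> Eset \<alpha> \<eta>" "norm \<eta> = S.ll" using h unfolding S.ll_def by auto
    show "\<forall>X\<in>span (e ` {1..k}). norm X = 1 \<longrightarrow>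
               Ric \<alpha> X = bnd (real CARD('n)) (real k) (meancurv \<alpha>)"
      using S.ii_ric(2)[OF a] unfolding S.bb_def .
    show "collinear {0, \<eta>, meanvec \<alpha>}" using S.ii_ric(3)[OF a] by blast
  qed
  have iii: "meancurv \<alpha> = 0 \<and> k = 2 \<longrightarrow>
        (\<forall>e p. onb e \<and> 1 \<le> p \<and> p \<le> 2 \<longrightarrow>
           (lhs \<alpha> e p = real (p * (CARD('n) - p)) \<longleftrightarrow>
             p = 2 \<and>
             (\<exists>\<eta>. norm \<eta> \<le> lam (real CARD('n)) 2 0 \<and>
                (\<forall>X\<in>span (e ` {1..2}). \<forall>Y\<in>span (e ` {1..2}). \<alpha> X Y = (X \<bullet> Y) *\<^sub>R \<eta>)) \<and>
             (\<forall>X\<in>span (e ` {1..2}). norm X = 1 \<longrightarrow>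
                Ric \<alpha> X = bnd (real CARD('n)) 2 0)))"
  proof (intro impI allI)
    fix e :: "nat \<Rightarrow> real^'n" and p :: nat assume hm: "meancurv \<alpha> = 0 \<and> k = 2" and h: "onb e \<and> 1 \<le> p \<and> p \<le> 2"
    interpret S: setting2 \<alpha> e k using S h by blast
    have u0: "S.uu = 0" using hm unfolding S.meancurv_N S.uu_def by simp
    have lq: "lam (real CARD('n)) 2 0 = S.ll" unfolding S.ll_def using hm by simp
    have bq: "bnd (real CARD('n)) 2 0 = S.bb" unfolding S.bb_def using hm by simp
    show "lhs \<alpha> e p = real (p * (CARD('n) - p)) \<longleftrightarrow>
             p = 2 \<and>
             (\<exists>\<eta>. norm \<eta> \<le> lam (real CARD('n)) 2 0 \<and>
                (\<forall>X\<in>span (e ` {1..2}). \<forall>Y\<in>span (e ` {1..2}). \<alpha> X Y = (X \<bullet> Y) *\<^sub>R \<eta>)) \<and>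
             (\<forall>X\<in>span (e ` {1..2}). norm X = 1 \<longrightarrow>
                Ric \<alpha> X = bnd (real CARD('n)) 2 0)"
      unfolding lq bq
    proof
      assume eq: "lhs \<alpha> e p = real (p * (CARD('n) - p))"
      show "p = 2 \<and>
             (\<exists>\<eta>. norm \<eta> \<le> S.ll \<and>
                (\<forall>X\<in>span (e ` {1..2}). \<forall>Y\<in>span (e ` {1..2}). \<alpha> X Y = (X \<bullet> Y) *\<^sub>R \<eta>)) \<and>
             (\<forall>X\<in>span (e ` {1..2}). norm X = 1 \<longrightarrow> Ric \<alpha> X = S.bb)"
        using S.iii_forward[OF u0 _ _ _ eq] hm h by blast
    next
      assume r: "p = 2 \<and>
             (\<exists>\<eta>. norm \<eta> \<le> S.ll \<and>
                (\<forall>X\<in>span (e ` {1..2}). \<forall>Y\<in>span (e ` {1..2}). \<alpha> X Y = (X \<bullet> Y) *\<^sub>R \<eta>)) \<and>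
             (\<forall>X\<in>span (e ` {1..2}). norm X = 1 \<longrightarrow> Ric \<alpha> X = S.bb)"
      then obtain \<eta> where "\<forall>X\<in>span (e ` {1..2}). \<forall>Y\<in>span (e ` {1..2}). \<alpha> X Y = (X \<bullet> Y) *\<^sub>R \<eta>" by blast
      then have "lhs \<alpha> e 2 = real (2 * (CARD('n) - 2))" using S.iii_backward[OF u0] hm r by blast
      then show "lhs \<alpha> e p = real (p * (CARD('n) - p))" using r by simp
    qed
  qed
  show ?thesis using i1 i2 i3 ii iii by blast
qed


end
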